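(* Let $n\ge1$, let $A_0,A_1\subseteq2^{<\omega}$, and let $C$ be $n$-fair for $A_0,A_1$. Let $(F,X)$ be a Mathias condition with $X$ $C$-computable. Let $m\ge1$, let $\varphi(G,U)$ be an $m$-by-$2^nm$ formula which is $\Sigma^0_1$ relative to $C$ and has an additional set parameter $G$, and let $M$ be an $m$-by-$2^nm$ disjoint matrix. Then there is a Mathias condition $(E,Y)$ extending $(F,X)$, with $Y$ $C$-computable, such that at least one of the following holds: (a) for every set $G$ satisfying $(E,Y)$, the formula $\varphi(G,U)$ is not essential in $M$; (b) $\varphi(E,V)$ holds for some $M$-valuation $V$ diagonalizing against $A_0,A_1$.
   Context: Mathias conditions. A Mathias condition is a pair $(F,X)$ with $F$ finite, $X$ infinite, and $\max F<\min X$. A condition $(E,Y)$ extends $(F,X)$ if $F\subseteq E$, $Y\subseteq X$, and $E\setminus F\subseteq X$. A set $G$ satisfies $(F,X)$ if $F\subseteq G$ and $G\setminus F\subseteq X$. Strings are finite binary strings, and $\preceq$ is the prefix relation. Two strings are incomparable if neither is a prefix of the other. Matrices. An $m$-by-$n$ matrix $M$ is an array of strings $\sigma_{i,j}$ ($i<m$, $j<n$), with rows $M(i)=(\sigma_{i,0},\dots,\sigma_{i,n-1})$. It is disjoint if each row consists of pairwise incomparable strings. Formulas. An $m$-by-$n$ formula is a formula with distinguished finite-set variables $U_{i,j}$. It is $\Sigma^{0,X}_1$ if it is $\Sigma^0_1$ relative to $X$. Valuations. An $M$-valuation is a tuple $V=(B_{i,j})$ of finite sets $B_{i,j}\subseteq\{\tau:\tau\succeq\sigma_{i,j}\}$.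 We write $\varphi(V)$ for $\varphi$ evaluated at $U_{i,j}:=B_{i,j}$, and $V(i)=(B_{i,0},\dots,B_{i,n-1})$. We write $V>s$ if all strings occurring in $V$ have length $>s$. Essential. $\varphi$ is essential in $M$ if for every $s$ there is an $M$-valuation $V>s$ with $\varphi(V)$. Diagonalization. An $M$-valuation $V$ diagonalizes against $A_0,A_1$ if for every $i<m$ there are components $L,R$ of $V(i)$ with $L\subseteq A_0$ and $R\subseteq A_1$. Fairness. For $n\ge1$, a set $X$ is $n$-fair for $A_0,A_1$ if the following holds: for every $m$, every $\Sigma^{0,X}_1$ $m$-by-$2^nm$ formula $\varphi$, and every $m$-by-$2^nm$ disjoint matrix $M$ in which $\varphi$ is essential, there is an $M$-valuation $V$ diagonalizing against $A_0,A_1$ with $\varphi(V)$. *)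

theory Defs
  imports Main "HOL-Library.Nat_Bijection" "HOL-Library.Sublist"
begin

datatype recf =
    Zero
  | Succ
  | Proj nat
  | Orc
  | Comp recf "recf list"
  | Prim recf recf
  | Mn recf

definition arg :: "nat \<Rightarrow> nat list \<Rightarrow> nat" where
  "arg i xs = (if i < length xs then xs ! i else 0)"

inductive eval :: "nat set \<Rightarrow> recf \<Rightarrow> nat list \<Rightarrow> nat \<Rightarrow> bool" for Or :: "nat set" where
  eval_Zero: "eval Or Zero xs 0"
| eval_Succ: "eval Or Succ xs (Suc (arg 0 xs))"
| eval_Proj: "eval Or (Proj i) xs (arg i xs)"
| eval_Orc: "eval Or Orc xs (if arg 0 xs \<in> Or then 1 else 0)"
| eval_Comp: "\<lbrakk> length ys = length gs; \<forall>k < length gs. eval Or (gs ! k) xs (ys ! k);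
                eval Or f ys z \<rbrakk> \<Longrightarrow> eval Or (Comp f gs) xs z"
| eval_Prim0: "eval Or f xs y \<Longrightarrow> eval Or (Prim f g) (0 # xs) y"
| eval_PrimS: "\<lbrakk> eval Or (Prim f g) (k # xs) y; eval Or g (k # y # xs) z \<rbrakk>
                \<Longrightarrow> eval Or (Prim f g) (Suc k # xs) z"
| eval_Mn: "\<lbrakk> eval Or f (k # xs) 0; \<forall>j < k. \<exists>y. eval Or f (j # xs) (Suc y) \<rbrakk>
                \<Longrightarrow> eval Or (Mn f) xs k"

definition join :: "nat set \<Rightarrow> nat set \<Rightarrow> nat set" where
  "join A B = {2 * x | x. x \<in> A} \<union> {2 * x + 1 | x. x \<in> B}"

definition computable_in :: "nat set \<Rightarrow> nat set \<Rightarrow> bool" where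
  "computable_in X C \<longleftrightarrow> (\<exists>f. \<forall>x. eval C f [x] (if x \<in> X then 1 else 0))"

type_synonym str = "bool list"

definition incomparable :: "str \<Rightarrow> str \<Rightarrow> bool" where
  "incomparable s t \<longleftrightarrow> \<not> prefix s t \<and> \<not> prefix t s"

text \<open>An m-by-n matrix is M :: nat => nat => str, with entries M i j for i<m, j<n.\<close>
type_synonym matrix = "nat \<Rightarrow> nat \<Rightarrow> str"
type_synonym valuation = "nat \<Rightarrow> nat \<Rightarrow> str set"

definition disjoint_matrix :: "nat \<Rightarrow> nat \<Rightarrow> matrix \<Rightarrow> bool" where
  "disjoint_matrix m n M \<longleftrightarrow>
     (\<forall>i<m. \<forall>j<n. \<forall>k<n. j \<noteq> k \<longrightarrow> incomparable (M i j) (M i k))"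

definition is_valuation :: "nat \<Rightarrow> nat \<Rightarrow> matrix \<Rightarrow> valuation \<Rightarrow> bool" where
  "is_valuation m n M V \<longleftrightarrow>
     (\<forall>i<m. \<forall>j<n. finite (V i j) \<and> V i j \<subseteq> {t. prefix (M i j) t})"

definition valuation_gt :: "nat \<Rightarrow> nat \<Rightarrow> valuation \<Rightarrow> nat \<Rightarrow> bool" where
  "valuation_gt m n V s \<longleftrightarrow> (\<forall>i<m. \<forall>j<n. \<forall>t \<in> V i j. length t > s)"

definition essential :: "nat \<Rightarrow> nat \<Rightarrow> matrix \<Rightarrow> (valuation \<Rightarrow> bool) \<Rightarrow> bool" where
  "essential m n M \<phi> \<longleftrightarrow>
     (\<forall>s. \<exists>V. is_valuation m n M V \<and> valuation_gt m n V s \<and> \<phi> V)"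

definition diagonalizes :: "nat \<Rightarrow> nat \<Rightarrow> valuation \<Rightarrow> str set \<Rightarrow> str set \<Rightarrow> bool" where
  "diagonalizes m n V A0 A1 \<longleftrightarrow>
     (\<forall>i<m. \<exists>L<n. \<exists>R<n. V i L \<subseteq> A0 \<and> V i R \<subseteq> A1)"

definition code_str :: "str \<Rightarrow> nat" where
  "code_str t = list_encode (map (\<lambda>b. if b then 1 else 0) t)"

definition code_val :: "nat \<Rightarrow> nat \<Rightarrow> valuation \<Rightarrow> nat" where
  "code_val m n V =
     list_encode (map (\<lambda>i. list_encode (map (\<lambda>j. set_encode (code_str ` V i j)) [0..<n])) [0..<m])"

definition finite_entries :: "nat \<Rightarrow> nat \<Rightarrow> valuation \<Rightarrow> bool" where
  "finite_entries m n V \<longleftrightarrow> (\<forall>i<m. \<forall>j<n. finite (V i j))"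

text \<open>An m-by-n formula (in the finite-set variables U_ij) that is Sigma^0_1 relative to Or:
  on (canonically coded) assignments of finite sets to the U_ij it is given by an
  Or-computably enumerable relation.\<close>
definition sigma1_formula :: "nat set \<Rightarrow> nat \<Rightarrow> nat \<Rightarrow> (valuation \<Rightarrow> bool) \<Rightarrow> bool" where
  "sigma1_formula Or m n \<phi> \<longleftrightarrow>
     (\<exists>f. \<forall>V. finite_entries m n V \<longrightarrow> (\<phi> V \<longleftrightarrow> (\<exists>y. eval Or f [code_val m n V] y)))"

text \<open>Same, with an additional set parameter G (Sigma^0_1 relative to Or, uniformly in G,
  i.e. enumerated by a single oracle program with oracle Or joined with G).\<close>
definition sigma1_formula_param ::
  "nat set \<Rightarrow> nat \<Rightarrow> nat \<Rightarrow> (nat set \<Rightarrow> valuation \<Rightarrow> bool) \<Rightarrow> bool" where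
  "sigma1_formula_param Or m n \<phi> \<longleftrightarrow>
     (\<exists>f. \<forall>G V. finite_entries m n V \<longrightarrow>
        (\<phi> G V \<longleftrightarrow> (\<exists>y. eval (join Or G) f [code_val m n V] y)))"

definition fair :: "nat \<Rightarrow> nat set \<Rightarrow> str set \<Rightarrow> str set \<Rightarrow> bool" where
  "fair n X A0 A1 \<longleftrightarrow>
     (\<forall>m (\<phi> :: valuation \<Rightarrow> bool) M.
        sigma1_formula X m (2 ^ n * m) \<phi> \<longrightarrow> disjoint_matrix m (2 ^ n * m) M \<longrightarrow>
        essential m (2 ^ n * m) M \<phi> \<longrightarrow>
        (\<exists>V. is_valuation m (2 ^ n * m) M V \<and> diagonalizes m (2 ^ n * m) V A0 A1 \<and> \<phi> V))"

definition mathias :: "nat set \<Rightarrow> nat set \<Rightarrow> bool" where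
  "mathias F X \<longleftrightarrow> finite F \<and> infinite X \<and> (\<forall>a\<in>F. \<forall>b\<in>X. a < b)"

definition mathias_ext :: "nat set \<Rightarrow> nat set \<Rightarrow> nat set \<Rightarrow> nat set \<Rightarrow> bool" where
  "mathias_ext E Y F X \<longleftrightarrow> F \<subseteq> E \<and> Y \<subseteq> X \<and> E - F \<subseteq> X"

definition satisfies :: "nat set \<Rightarrow> nat set \<Rightarrow> nat set \<Rightarrow> bool" where
  "satisfies G F X \<longleftrightarrow> F \<subseteq> G \<and> G - F \<subseteq> X"

end

theory Submission
  imports Defs
begin

lemma arg_simps[simp]: "arg 0 (x # xs) = x" "arg (Suc i) (x # xs) = arg i xs" "arg i [] = 0"
  by (auto simp: arg_def)

lemma arg_num[simp]: "arg (numeral k) (x # xs) = arg (pred_numeral k) xs"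
  by (simp add: numeral_eq_Suc)

lemma comp_eval:
  assumes "list_all2 (\<lambda>g y. eval Q g xs y) gs ys" "eval Q f ys z"
  shows "eval Q (Comp f gs) xs z"
  using assms by (intro eval_Comp) (auto simp: list_all2_conv_all_nth)

lemma prim_eval:
  assumes "eval Q f xs b" "\<And>j r. eval Q g (j # r # xs) (G j r)"
  shows "eval Q (Prim f g) (k # xs) (rec_nat b G k)"
proof (induction k)
  case 0 then show ?case using assms(1) by (simp add: eval_Prim0)
next
  case (Suc k) then show ?case using assms(2) eval_PrimS by simp
qed

lemma eval_Proj': "y = arg i xs \<Longrightarrow> eval Q (Proj i) xs y" using eval_Proj by simp
lemma eval_Succ': "y = Suc (arg 0 xs) \<Longrightarrow> eval Q Succ xs y" using eval_Succ by simp
lemma eval_Zero': "y = 0 \<Longrightarrow> eval Q Zero xs y" using eval_Zero by simp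
lemma eval_Orc': "y = (if arg 0 xs \<in> Q then 1 else 0) \<Longrightarrow> eval Q Orc xs y" using eval_Orc by simp

definition "projs k a = map Proj [k..<k+a]"

lemma projs_ok:
  assumes "length ys = k"
  shows "list_all2 (\<lambda>g y. eval Q g (ys @ xs) y) (projs k (length xs)) xs"
proof -
  have "arg (k + i) (ys @ xs) = xs ! i" if "i < length xs" for i
    using that assms by (simp add: arg_def nth_append)
  then show ?thesis using assms
    by (auto simp: projs_def list_all2_conv_all_nth intro!: eval_Proj')
qed

lemma comp1: "eval Q g xs y \<Longrightarrow> eval Q f [y] z \<Longrightarrow> eval Q (Comp f [g]) xs z"
  by (rule comp_eval) auto
lemma comp2: "eval Q g1 xs y1 \<Longrightarrow> eval Q g2 xs y2 \<Longrightarrow> eval Q f [y1,y2] z \<Longrightarrow> eval Q (Comp f [g1,g2]) xs z"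
  by (rule comp_eval) auto
lemma comp3: "eval Q g1 xs y1 \<Longrightarrow> eval Q g2 xs y2 \<Longrightarrow> eval Q g3 xs y3 \<Longrightarrow> eval Q f [y1,y2,y3] z \<Longrightarrow> eval Q (Comp f [g1,g2,g3]) xs z"
  by (rule comp_eval) auto

definition "oneP = Comp Succ [Zero]"
definition "predP = Prim Zero (Proj 0)"
definition "sgP = Prim Zero oneP"
definition "nsgP = Prim oneP Zero"
definition "condP = Prim (Proj 1) (Proj 2)"
definition "addP = Prim (Proj 0) (Comp Succ [Proj 1])"
definition "parP = Prim Zero (Comp nsgP [Proj 1])"
definition "halfP = Prim Zero (Comp addP [Proj 1, Comp parP [Proj 0]])"
definition "ihalfP = Prim (Proj 0) (Comp halfP [Proj 1])"
definition "bitP = Comp parP [ihalfP]"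

lemma oneP_ev: "y = 1 \<Longrightarrow> eval Q oneP xs y"
  unfolding oneP_def by (rule comp1[OF eval_Zero]) (auto intro: eval_Succ')

lemma predP_ev: "y = x - 1 \<Longrightarrow> eval Q predP [x] y"
proof -
  have "eval Q predP [x] (rec_nat 0 (\<lambda>j r. j) x)"
    unfolding predP_def by (rule prim_eval) (auto intro: eval_Zero eval_Proj')
  moreover have "rec_nat 0 (\<lambda>j r. j) x = x - 1" by (cases x) auto
  ultimately show "y = x - 1 \<Longrightarrow> eval Q predP [x] y" by metis
qed

lemma sgP_ev: "y = (if x = 0 then 0 else 1) \<Longrightarrow> eval Q sgP [x] y"
proof -
  have "eval Q sgP [x] (rec_nat 0 (\<lambda>j r. 1) x)"
    unfolding sgP_def by (rule prim_eval) (auto intro: eval_Zero oneP_ev)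
  moreover have "rec_nat 0 (\<lambda>j r. 1) x = (if x = 0 then 0 else 1)" by (cases x) auto
  ultimately show "y = (if x = 0 then 0 else 1) \<Longrightarrow> eval Q sgP [x] y" by metis
qed

lemma nsgP_ev: "y = (if x = 0 then 1 else 0) \<Longrightarrow> eval Q nsgP [x] y"
proof -
  have "eval Q nsgP [x] (rec_nat 1 (\<lambda>j r. 0) x)"
    unfolding nsgP_def by (rule prim_eval) (auto intro: eval_Zero oneP_ev)
  moreover have "rec_nat 1 (\<lambda>j r. 0) x = (if x = 0 then 1 else 0)" by (cases x) auto
  ultimately show "y = (if x = 0 then 1 else 0) \<Longrightarrow> eval Q nsgP [x] y" by metis
qed

lemma condP_ev: "z = (if b = 0 then y else x) \<Longrightarrow> eval Q condP [b, x, y] z"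
proof -
  have "eval Q condP [b, x, y] (rec_nat y (\<lambda>j r. x) b)"
    unfolding condP_def by (rule prim_eval) (auto intro: eval_Proj')
  moreover have "rec_nat y (\<lambda>j r. x) b = (if b = 0 then y else x)" by (cases b) auto
  ultimately show "z = (if b = 0 then y else x) \<Longrightarrow> eval Q condP [b, x, y] z" by metis
qed

lemma addP_ev: "z = a + b \<Longrightarrow> eval Q addP [a, b] z"
proof -
  have "eval Q addP [a, b] (rec_nat b (\<lambda>j r. Suc r) a)"
    unfolding addP_def by (rule prim_eval) (auto intro!: eval_Proj' comp1 eval_Succ')
  moreover have "rec_nat b (\<lambda>j r. Suc r) a = a + b" by (induction a) auto
  ultimately show "z = a + b \<Longrightarrow> eval Q addP [a, b] z" by metis
qed

lemma parP_ev: "z = x mod 2 \<Longrightarrow> eval Q parP [x] z"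
proof -
  have "eval Q parP [x] (rec_nat 0 (\<lambda>j r. if r = 0 then 1 else 0) x)"
    unfolding parP_def by (rule prim_eval) (auto intro!: eval_Zero eval_Proj' comp1 nsgP_ev)
  moreover have "rec_nat 0 (\<lambda>j r. if r = 0 then 1 else 0) x = x mod 2"
    by (induction x) (auto simp: mod_Suc)
  ultimately show "z = x mod 2 \<Longrightarrow> eval Q parP [x] z" by metis
qed

lemma halfP_ev: "z = x div 2 \<Longrightarrow> eval Q halfP [x] z"
proof -
  have "eval Q halfP [x] (rec_nat 0 (\<lambda>j r. r + j mod 2) x)"
    unfolding halfP_def by (rule prim_eval) (auto intro!: eval_Zero eval_Proj' comp1 comp2 addP_ev parP_ev)
  moreover have "rec_nat 0 (\<lambda>j r. r + j mod 2) x = x div 2"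
  proof (induction x)
    case (Suc x) then show ?case by simp presburger
  qed simp
  ultimately show "z = x div 2 \<Longrightarrow> eval Q halfP [x] z" by metis
qed

lemma ihalfP_ev: "z = e div 2 ^ k \<Longrightarrow> eval Q ihalfP [k, e] z"
proof -
  have "eval Q ihalfP [k, e] (rec_nat e (\<lambda>j r. r div 2) k)"
    unfolding ihalfP_def by (rule prim_eval) (auto intro!: eval_Proj' comp1 halfP_ev)
  moreover have "rec_nat e (\<lambda>j r. r div 2) k = e div 2 ^ k"
    by (induction k) (auto simp: div_mult2_eq[symmetric] mult.commute)
  ultimately show "z = e div 2 ^ k \<Longrightarrow> eval Q ihalfP [k, e] z" by metis
qed

lemma bitP_ev: "z = (if k \<in> set_decode e then 1 else 0) \<Longrightarrow> eval Q bitP [k, e] z"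
  unfolding bitP_def by (rule comp1[OF ihalfP_ev[OF refl]], rule parP_ev) (auto simp: set_decode_def odd_iff_mod_2_eq_one)

fun constP :: "nat \<Rightarrow> recf" where
  "constP 0 = Zero" | "constP (Suc k) = Comp Succ [constP k]"

lemma constP_ev: "eval Q (constP k) xs k"
  by (induction k) (auto intro!: eval_Zero' comp1 eval_Succ')

fun subcP :: "nat \<Rightarrow> recf" where
  "subcP 0 = Proj 0" | "subcP (Suc k) = Comp predP [subcP k]"

lemma subcP_ev: "eval Q (subcP b) [x] (x - b)"
  by (induction b) (auto intro!: eval_Proj' comp1 predP_ev)

fun allnz :: "recf list \<Rightarrow> recf" where
  "allnz [] = oneP" | "allnz (p # ps) = Comp condP [p, allnz ps, Zero]"

lemma allnz_ev: "list_all2 (\<lambda>p y. eval Q p xs y) ps ys \<Longrightarrow>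
   eval Q (allnz ps) xs (if list_all (\<lambda>y. y \<noteq> 0) ys then 1 else 0)"
proof (induction ps arbitrary: ys)
  case Nil then show ?case by (auto intro: oneP_ev)
next
  case (Cons p ps)
  then obtain y ys' where ys: "ys = y # ys'" "eval Q p xs y" "list_all2 (\<lambda>p y. eval Q p xs y) ps ys'"
    by (cases ys) auto
  show ?case using ys Cons.IH[OF ys(3)] by (auto intro!: comp3 eval_Zero' condP_ev)
qed

fun mnst :: "(nat \<Rightarrow> nat) \<Rightarrow> nat \<Rightarrow> nat" where
  "mnst v 0 = 0"
| "mnst v (Suc j) = (let s = mnst v j in if s = 0 then (if v j = 0 then 1 else if v j - 1 = 0 then Suc (Suc j) else 0) else s)"

primrec kv :: "recf \<Rightarrow> nat set \<Rightarrow> nat \<Rightarrow> nat list \<Rightarrow> nat" where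
  "kv Zero Q t xs = 1"
| "kv Succ Q t xs = Suc (Suc (arg 0 xs))"
| "kv (Proj i) Q t xs = Suc (arg i xs)"
| "kv Orc Q t xs = Suc (if arg 0 xs \<in> Q then 1 else 0)"
| "kv (Comp f gs) Q t xs = (if list_all (\<lambda>y. y \<noteq> 0) (map (\<lambda>g. kv g Q t xs) gs)
      then kv f Q t (map (\<lambda>g. kv g Q t xs - 1) gs) else 0)"
| "kv (Prim f g) Q t xs = (case xs of [] \<Rightarrow> 0 | k # ys \<Rightarrow>
      rec_nat (kv f Q t ys) (\<lambda>j r. if r = 0 then 0 else kv g Q t (j # (r - 1) # ys)) k)"
| "kv (Mn f) Q t xs = mnst (\<lambda>j. kv f Q t (j # xs)) (Suc t) - 1"

primrec Kp :: "recf \<Rightarrow> recf \<Rightarrow> nat \<Rightarrow> recf" where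
  "Kp mem Zero a = oneP"
| "Kp mem Succ a = Comp Succ [Comp Succ [Proj 2]]"
| "Kp mem (Proj i) a = Comp Succ [Proj (i + 2)]"
| "Kp mem Orc a = Comp Succ [Comp mem [Proj 1, Proj 2]]"
| "Kp mem (Comp f gs) a = Comp condP [allnz (map (\<lambda>g. Kp mem g a) gs),
     Comp (Kp mem f (length gs)) (Proj 0 # Proj 1 # map (\<lambda>g. Comp predP [Kp mem g a]) gs), Zero]"
| "Kp mem (Prim f g) a = (case a of 0 \<Rightarrow> Zero | Suc a' \<Rightarrow>
     Comp (Prim (Kp mem f a') (Comp condP [Proj 1,
        Comp (Kp mem g (Suc (Suc a'))) ([Proj 2, Proj 3, Proj 0, Comp predP [Proj 1]] @ projs 4 a'), Zero]))
      ([Proj 2, Proj 0, Proj 1] @ projs 3 a'))"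
| "Kp mem (Mn f) a = Comp predP [Comp (Prim Zero (Comp condP [Proj 1, Proj 1,
     Comp condP [Comp (Kp mem f (Suc a)) ([Proj 2, Proj 3, Proj 0] @ projs 4 a),
        Comp condP [Comp predP [Comp (Kp mem f (Suc a)) ([Proj 2, Proj 3, Proj 0] @ projs 4 a)],
           Zero, Comp Succ [Comp Succ [Proj 0]]], oneP]]))
     (Comp Succ [Proj 0] # projs 0 (a + 2))]"

lemma mnst_rec: "rec_nat 0 (\<lambda>j s. if s = 0 then (if v j = 0 then 1 else if v j - 1 = 0 then Suc (Suc j) else 0) else s) n = mnst v n"
  by (induction n) (auto simp: Let_def)

lemma list_all2_map_same: "(\<And>g. g \<in> set gs \<Longrightarrow> P (f g) (h g)) \<Longrightarrow> list_all2 P (map f gs) (map h gs)"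
  by (induction gs) auto

lemma Kp_correct:
  assumes mem: "\<And>e x. eval Q mem [e, x] (if x \<in> Oe e then 1 else 0)"
  shows "length xs = a \<Longrightarrow> eval Q (Kp mem f a) (t # e # xs) (kv f (Oe e) t xs)"
proof (induction f arbitrary: a xs)
  case Zero then show ?case by (auto intro: oneP_ev)
next
  case Succ then show ?case by (auto intro!: comp1 eval_Succ' eval_Proj')
next
  case (Proj i) then show ?case by (auto intro!: comp1 eval_Succ' eval_Proj')
next
  case Orc then show ?case by (auto intro!: comp1 comp2 eval_Succ' eval_Proj' mem)
next
  case (Comp f gs)
  have L: "list_all2 (\<lambda>p y. eval Q p (t # e # xs) y) (map (\<lambda>g. Kp mem g a) gs) (map (\<lambda>g. kv g (Oe e) t xs) gs)"
    using Comp by (intro list_all2_map_same) auto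
  have L2: "list_all2 (\<lambda>p y. eval Q p (t # e # xs) y) (Proj 0 # Proj 1 # map (\<lambda>g. Comp predP [Kp mem g a]) gs)
      (t # e # map (\<lambda>g. kv g (Oe e) t xs - 1) gs)"
    using Comp by (auto intro!: list_all2_map_same eval_Proj' comp1 predP_ev)
  have F: "eval Q (Kp mem f (length gs)) (t # e # map (\<lambda>g. kv g (Oe e) t xs - 1) gs)
      (kv f (Oe e) t (map (\<lambda>g. kv g (Oe e) t xs - 1) gs))"
    using Comp.IH(1)[of "map (\<lambda>g. kv g (Oe e) t xs - 1) gs"] by simp
  show ?case unfolding Kp.simps kv.simps
    by (rule comp3[OF allnz_ev[OF L] comp_eval[OF L2 F] eval_Zero], rule condP_ev) simp
next
  case (Prim f g)
  show ?case
  proof (cases a)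
    case 0 then show ?thesis using Prim by (auto intro: eval_Zero')
  next
    case (Suc a')
    with Prim obtain k xs' where xs: "xs = k # xs'" "length xs' = a'" by (cases xs) auto
    have P: "list_all2 (\<lambda>p y. eval Q p (t # e # k # xs') y) ([Proj 2, Proj 0, Proj 1] @ projs 3 a') (k # t # e # xs')"
      using projs_ok[of "[t,e,k]" 3 Q xs'] xs by (auto intro!: eval_Proj')
    have B: "eval Q (Kp mem f a') (t # e # xs') (kv f (Oe e) t xs')" using Prim.IH(1)[of xs'] xs(2) by simp
    have S: "eval Q (Comp condP [Proj 1,
        Comp (Kp mem g (Suc (Suc a'))) ([Proj 2, Proj 3, Proj 0, Comp predP [Proj 1]] @ projs 4 a'), Zero])
         (j # r # t # e # xs') (if r = 0 then 0 else kv g (Oe e) t (j # (r - 1) # xs'))" for j r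
    proof -
      have P2: "list_all2 (\<lambda>p y. eval Q p (j # r # t # e # xs') y) ([Proj 2, Proj 3, Proj 0, Comp predP [Proj 1]] @ projs 4 a') (t # e # j # (r - 1) # xs')"
        using projs_ok[of "[j,r,t,e]" 4 Q xs'] xs by (auto intro!: eval_Proj' comp1 predP_ev)
      have G: "eval Q (Kp mem g (Suc (Suc a'))) (t # e # j # (r - 1) # xs') (kv g (Oe e) t (j # (r - 1) # xs'))"
        using Prim.IH(2)[of "j # (r - 1) # xs'"] xs(2) by simp
      show ?thesis by (rule comp3[OF eval_Proj'[OF refl] comp_eval[OF P2 G] eval_Zero], rule condP_ev) simp
    qed
    have "eval Q (Kp mem (Prim f g) (Suc a')) (t # e # k # xs') (kv (Prim f g) (Oe e) t (k # xs'))"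
      unfolding Kp.simps kv.simps nat.case list.case
      by (rule comp_eval[OF P], rule prim_eval[OF B S])
    then show ?thesis using Suc xs by simp
  qed
next
  case (Mn f)
  let ?v = "\<lambda>j. kv f (Oe e) t (j # xs)"
  have V: "eval Q (Comp (Kp mem f (Suc a)) ([Proj 2, Proj 3, Proj 0] @ projs 4 a)) (j # s # t # e # xs) (?v j)" for j s
  proof -
    have P2: "list_all2 (\<lambda>p y. eval Q p (j # s # t # e # xs) y) ([Proj 2, Proj 3, Proj 0] @ projs 4 a) (t # e # j # xs)"
      using projs_ok[of "[j,s,t,e]" 4 Q xs] Mn.prems by (auto intro!: eval_Proj')
    show ?thesis by (rule comp_eval[OF P2]) (use Mn.IH[of "j # xs"] Mn.prems in simp)
  qed
  have S: "eval Q (Comp condP [Proj 1, Proj 1,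
     Comp condP [Comp (Kp mem f (Suc a)) ([Proj 2, Proj 3, Proj 0] @ projs 4 a),
        Comp condP [Comp predP [Comp (Kp mem f (Suc a)) ([Proj 2, Proj 3, Proj 0] @ projs 4 a)],
           Zero, Comp Succ [Comp Succ [Proj 0]]], oneP]]) (j # s # t # e # xs)
     (if s = 0 then (if ?v j = 0 then 1 else if ?v j - 1 = 0 then Suc (Suc j) else 0) else s)" for j s
    by (rule comp3[OF eval_Proj'[OF refl] eval_Proj'[OF refl] comp3[OF V comp3[OF comp1[OF V predP_ev[OF refl]]
       eval_Zero'[OF refl] comp1[OF comp1[OF eval_Proj'[OF refl] eval_Succ'[OF refl]] eval_Succ'[OF refl]]
       condP_ev[OF refl]] oneP_ev[OF refl] condP_ev[OF refl]]], rule condP_ev) simp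
  have P: "list_all2 (\<lambda>p y. eval Q p (t # e # xs) y) (Comp Succ [Proj 0] # projs 0 (a + 2)) (Suc t # t # e # xs)"
    using projs_ok[of "[]" 0 Q "t # e # xs"] Mn.prems by (auto intro!: comp1 eval_Proj' eval_Succ')
  show ?case unfolding Kp.simps kv.simps
    by (rule comp1[OF comp_eval[OF P prim_eval[OF eval_Zero S]]], rule predP_ev) (simp add: mnst_rec)
qed

lemma mnst_0: "(\<forall>j<n. v j \<ge> 2) \<Longrightarrow> mnst v n = 0"
  by (induction n) (auto simp: Let_def)

lemma mnst_0D: "mnst v n = 0 \<Longrightarrow> \<forall>j<n. v j \<ge> 2"
proof (induction n)
  case (Suc n)
  then show ?case by (auto simp: Let_def less_Suc_eq split: if_splits)
qed simp

lemma mnst_SSD: "mnst v n = Suc (Suc k) \<Longrightarrow> k < n \<and> v k = 1 \<and> (\<forall>j<k. v j \<ge> 2)"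
proof (induction n)
  case (Suc n)
  show ?case
  proof (cases "mnst v n = 0")
    case True
    then show ?thesis using Suc.prems mnst_0D[OF True] by (auto simp: Let_def split: if_splits)
  next
    case False
    then show ?thesis using Suc by (auto simp: Let_def)
  qed
qed simp

lemma mnst_SS: "k < n \<Longrightarrow> v k = 1 \<Longrightarrow> \<forall>j<k. v j \<ge> 2 \<Longrightarrow> mnst v n = Suc (Suc k)"
proof (induction n)
  case (Suc n)
  show ?case
  proof (cases "k < n")
    case True then show ?thesis using Suc by (auto simp: Let_def)
  next
    case False
    then have "k = n" using Suc by simp
    then show ?thesis using mnst_0[of n v] Suc.prems by (auto simp: Let_def)
  qed
qed simp

lemma kv_sound: "kv f Q t xs = Suc y \<Longrightarrow> eval Q f xs y"
proof (induction f arbitrary: xs y)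
  case Zero then show ?case by (auto intro: eval_Zero')
next
  case Succ then show ?case by (auto intro: eval_Succ')
next
  case (Proj i) then show ?case by (auto intro: eval_Proj')
next
  case Orc then show ?case by (auto intro: eval_Orc')
next
  case (Comp f gs)
  let ?ys = "map (\<lambda>g. kv g Q t xs - 1) gs"
  have A: "list_all (\<lambda>y. y \<noteq> 0) (map (\<lambda>g. kv g Q t xs) gs)" and F: "kv f Q t ?ys = Suc y"
    using Comp.prems by (auto split: if_splits)
  have "eval Q f ?ys y" using Comp.IH(1) F by blast
  moreover have "\<forall>k<length gs. eval Q (gs ! k) xs (?ys ! k)"
  proof (intro allI impI)
    fix k assume k: "k < length gs"
    then have "kv (gs ! k) Q t xs \<noteq> 0" using A by (auto simp: list_all_length)
    then have "kv (gs ! k) Q t xs = Suc (?ys ! k)" using k by simp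
    then show "eval Q (gs ! k) xs (?ys ! k)" using Comp.IH(2) k by (meson nth_mem)
  qed
  ultimately show ?case by (intro eval_Comp[of ?ys]) auto
next
  case (Prim f g)
  then obtain k ys where xs: "xs = k # ys" by (cases xs) auto
  have "rec_nat (kv f Q t ys) (\<lambda>j r. if r = 0 then 0 else kv g Q t (j # (r - 1) # ys)) k = Suc y
        \<Longrightarrow> eval Q (Prim f g) (k # ys) y" for y
  proof (induction k arbitrary: y)
    case 0 then show ?case using Prim.IH(1) by (auto intro: eval_Prim0)
  next
    case (Suc k)
    let ?r = "rec_nat (kv f Q t ys) (\<lambda>j r. if r = 0 then 0 else kv g Q t (j # (r - 1) # ys)) k"
    have r: "?r \<noteq> 0" and G: "kv g Q t (k # (?r - 1) # ys) = Suc y" using Suc.prems by (auto split: if_splits)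
    have "eval Q (Prim f g) (k # ys) (?r - 1)" using Suc.IH r by simp
    then show ?case using Prim.IH(2)[OF G] by (rule eval_PrimS)
  qed
  then show ?case using Prim.prems xs by simp
next
  case (Mn f)
  let ?v = "\<lambda>j. kv f Q t (j # xs)"
  have "mnst ?v (Suc t) = Suc (Suc y)" using Mn.prems by simp
  from mnst_SSD[OF this] have h: "?v y = 1" "\<forall>j<y. ?v j \<ge> 2" by auto
  have "eval Q f (y # xs) 0" using Mn.IH h(1) by simp
  moreover have "\<forall>j<y. \<exists>z. eval Q f (j # xs) (Suc z)"
  proof (intro allI impI)
    fix j assume "j < y"
    then have "?v j = Suc (Suc (?v j - 2))" using h(2) by fastforce
    then show "\<exists>z. eval Q f (j # xs) (Suc z)" using Mn.IH by blast
  qed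
  ultimately show ?case by (rule eval_Mn)
qed

lemma kv_mono: "kv f Q t xs = Suc y \<Longrightarrow> t \<le> t' \<Longrightarrow> kv f Q t' xs = Suc y"
proof (induction f arbitrary: xs y)
  case (Comp f gs)
  have A: "list_all (\<lambda>y. y \<noteq> 0) (map (\<lambda>g. kv g Q t xs) gs)" and F: "kv f Q t (map (\<lambda>g. kv g Q t xs - 1) gs) = Suc y"
    using Comp.prems by (auto split: if_splits)
  have E: "kv g Q t' xs = kv g Q t xs" if "g \<in> set gs" for g
  proof -
    have "kv g Q t xs \<noteq> 0" using A that by (auto simp: list_all_iff)
    then have "kv g Q t xs = Suc (kv g Q t xs - 1)" by simp
    then show ?thesis using Comp.IH(2)[OF that _ Comp.prems(2)] by metis
  qed
  then have M1: "map (\<lambda>g. kv g Q t' xs) gs = map (\<lambda>g. kv g Q t xs) gs"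
    and M2: "map (\<lambda>g. kv g Q t' xs - 1) gs = map (\<lambda>g. kv g Q t xs - 1) gs" by auto
  show ?case unfolding kv.simps M1 M2 using A Comp.IH(1)[OF F Comp.prems(2)] by simp
next
  case (Prim f g)
  then obtain k ys where xs: "xs = k # ys" by (cases xs) auto
  have "rec_nat (kv f Q t ys) (\<lambda>j r. if r = 0 then 0 else kv g Q t (j # (r - 1) # ys)) k = Suc y
        \<Longrightarrow> rec_nat (kv f Q t' ys) (\<lambda>j r. if r = 0 then 0 else kv g Q t' (j # (r - 1) # ys)) k = Suc y" for y
  proof (induction k arbitrary: y)
    case 0 then show ?case using Prim.IH(1) Prim.prems(2) by simp
  next
    case (Suc k)
    let ?r = "rec_nat (kv f Q t ys) (\<lambda>j r. if r = 0 then 0 else kv g Q t (j # (r - 1) # ys)) k"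
    have r: "?r \<noteq> 0" and G: "kv g Q t (k # (?r - 1) # ys) = Suc y" using Suc.prems by (auto split: if_splits)
    have "rec_nat (kv f Q t' ys) (\<lambda>j r. if r = 0 then 0 else kv g Q t' (j # (r - 1) # ys)) k = ?r"
      using Suc.IH[of "?r - 1"] r by simp
    then show ?case using Prim.IH(2)[OF G Prim.prems(2)] r by simp
  qed
  then show ?case using Prim.prems xs by simp
next
  case (Mn f)
  let ?v = "\<lambda>j. kv f Q t (j # xs)"
  let ?w = "\<lambda>j. kv f Q t' (j # xs)"
  have "mnst ?v (Suc t) = Suc (Suc y)" using Mn.prems by simp
  from mnst_SSD[OF this] have h: "y < Suc t" "?v y = 1" "\<forall>j<y. ?v j \<ge> 2" by auto
  have "?w y = 1" using Mn.IH h(2) Mn.prems(2) by simp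
  moreover have "\<forall>j<y. ?w j \<ge> 2"
  proof (intro allI impI)
    fix j assume "j < y"
    then have "?v j = Suc (?v j - 1)" "?v j \<ge> 2" using h(3) by fastforce+
    then show "?w j \<ge> 2" using Mn.IH Mn.prems(2) by metis
  qed
  ultimately have "mnst ?w (Suc t') = Suc (Suc y)" using h(1) Mn.prems(2) by (intro mnst_SS) auto
  then show ?case by simp
qed simp_all

lemma kv_complete: "eval Q f xs y \<Longrightarrow> \<exists>t. kv f Q t xs = Suc y"
proof (induction rule: eval.induct)
  case (eval_Comp ys gs xs f z)
  then obtain T where T: "\<forall>k<length gs. kv (gs ! k) Q (T k) xs = Suc (ys ! k)" by metis
  obtain tf where tf: "kv f Q tf ys = Suc z" using eval_Comp by blast
  define TT where "TT = tf + (\<Sum>k<length gs. T k)"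
  have "T k \<le> TT" if "k < length gs" for k
    unfolding TT_def using that by (simp add: member_le_sum trans_le_add2)
  then have K: "kv (gs ! k) Q TT xs = Suc (ys ! k)" if "k < length gs" for k
    using T kv_mono that by blast
  have M1: "map (\<lambda>g. kv g Q TT xs) gs = map Suc ys"
    using K eval_Comp.hyps(1) by (intro nth_equalityI) auto
  have M2: "map (\<lambda>g. kv g Q TT xs - 1) gs = ys"
    using K eval_Comp.hyps(1) by (intro nth_equalityI) auto
  have "kv f Q TT ys = Suc z" using kv_mono[OF tf] unfolding TT_def by simp
  then have "kv (Comp f gs) Q TT xs = Suc z" unfolding kv.simps M1 M2 by (simp add: list_all_iff)
  then show ?case by blast
next
  case (eval_Prim0 f xs y g)
  then show ?case by simp
next
  case (eval_PrimS f g k xs y z)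
  obtain t1 where t1: "kv (Prim f g) Q t1 (k # xs) = Suc y" using eval_PrimS by blast
  obtain t2 where t2: "kv g Q t2 (k # y # xs) = Suc z" using eval_PrimS by blast
  have a: "kv (Prim f g) Q (t1 + t2) (k # xs) = Suc y" using kv_mono[OF t1] by simp
  have b: "kv g Q (t1 + t2) (k # y # xs) = Suc z" using kv_mono[OF t2] by simp
  have "kv (Prim f g) Q (t1 + t2) (Suc k # xs) = Suc z" using a b by simp
  then show ?case by blast
next
  case (eval_Mn f k xs)
  obtain t0 where t0: "kv f Q t0 (k # xs) = Suc 0" using eval_Mn by blast
  have "\<forall>j<k. \<exists>t y. kv f Q t (j # xs) = Suc (Suc y)" using eval_Mn.IH(2) by blast
  then obtain T Y where TY: "\<forall>j<k. kv f Q (T j) (j # xs) = Suc (Suc (Y j))" by metis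
  define TT where "TT = t0 + k + (\<Sum>j<k. T j)"
  have "T j \<le> TT" if "j < k" for j
    unfolding TT_def using that by (simp add: member_le_sum trans_le_add2)
  then have K: "kv f Q TT (j # xs) = Suc (Suc (Y j))" if "j < k" for j
    using TY kv_mono that by blast
  have K0: "kv f Q TT (k # xs) = Suc 0" using kv_mono[OF t0] unfolding TT_def by simp
  have "mnst (\<lambda>j. kv f Q TT (j # xs)) (Suc TT) = Suc (Suc k)"
    by (rule mnst_SS) (use K K0 TT_def in auto)
  then have "kv (Mn f) Q TT xs = Suc k" by simp
  then show ?case by blast
qed auto

lemma eval_det: "eval Q f xs y \<Longrightarrow> eval Q f xs z \<Longrightarrow> y = z"
proof (induction arbitrary: z rule: eval.induct)
  case (eval_Comp ys gs xs f z')
  from eval_Comp.prems obtain ys' where ys': "length ys' = length gs" "\<forall>k<length gs. eval Q (gs ! k) xs (ys' ! k)" "eval Q f ys' z"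
    by (cases rule: eval.cases) auto
  have "ys' = ys" using ys' eval_Comp.hyps eval_Comp.IH by (intro nth_equalityI) auto
  then show ?case using eval_Comp.IH ys' by blast
next
  case (eval_Prim0 f xs y g)
  from eval_Prim0.prems show ?case by (cases rule: eval.cases) (use eval_Prim0 in auto)
next
  case (eval_PrimS f g k xs y z')
  from eval_PrimS.prems obtain y' where "eval Q (Prim f g) (k # xs) y'" "eval Q g (k # y' # xs) z"
    by (cases rule: eval.cases) auto
  then show ?case using eval_PrimS by blast
next
  case (eval_Mn f k xs)
  from eval_Mn.prems have z: "eval Q f (z # xs) 0 \<and> (\<forall>j<z. \<exists>y. eval Q f (j # xs) (Suc y))"
    by (cases rule: eval.cases) blast+
  show ?case
  proof (rule ccontr)
    assume "k \<noteq> z"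
    then consider "k < z" | "z < k" by linarith
    then show False
    proof cases
      case 1
      then obtain y where "eval Q f (k # xs) (Suc y)" using z by blast
      then show False using eval_Mn.IH(1) by fastforce
    next
      case 2
      then obtain y where "eval Q f (z # xs) (Suc y)" "\<And>w. eval Q f (z # xs) w \<Longrightarrow> Suc y = w"
        using eval_Mn.IH(2) by blast
      then show False using z by fastforce
    qed
  qed
qed (auto elim: eval.cases)

lemma finite_use: "eval Q f xs y \<Longrightarrow> \<exists>S. finite S \<and> (\<forall>Q'. (\<forall>x\<in>S. (x \<in> Q) = (x \<in> Q')) \<longrightarrow> eval Q' f xs y)"
proof (induction rule: eval.induct)
  case (eval_Zero xs) then show ?case by (auto intro: eval.eval_Zero)
next
  case (eval_Succ xs) then show ?case by (auto intro: eval.eval_Succ)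
next
  case (eval_Proj i xs) then show ?case by (auto intro: eval.eval_Proj)
next
  case (eval_Orc xs)
  show ?case by (rule exI[of _ "{arg 0 xs}"]) (auto intro!: eval_Orc')
next
  case (eval_Comp ys gs xs f z)
  then obtain S where S: "\<forall>k<length gs. finite (S k) \<and> (\<forall>Q'. (\<forall>x\<in>S k. (x \<in> Q) = (x \<in> Q')) \<longrightarrow> eval Q' (gs ! k) xs (ys ! k))"
    by metis
  obtain Sf where Sf: "finite Sf" "\<forall>Q'. (\<forall>x\<in>Sf. (x \<in> Q) = (x \<in> Q')) \<longrightarrow> eval Q' f ys z" using eval_Comp by blast
  show ?case
  proof (rule exI[of _ "Sf \<union> (\<Union>k<length gs. S k)"], intro conjI allI impI)
    show "finite (Sf \<union> (\<Union>k<length gs. S k))" using S Sf by auto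
    fix Q' assume A: "\<forall>x\<in>Sf \<union> (\<Union>k<length gs. S k). (x \<in> Q) = (x \<in> Q')"
    show "eval Q' (Comp f gs) xs z"
    proof (rule eval.eval_Comp[OF eval_Comp.hyps(1)])
      show "\<forall>k<length gs. eval Q' (gs ! k) xs (ys ! k)" using S A by blast
      show "eval Q' f ys z" using Sf A by blast
    qed
  qed
next
  case (eval_Prim0 f xs y g) then show ?case by (meson eval.eval_Prim0)
next
  case (eval_PrimS f g k xs y z)
  then obtain S1 S2 where "finite S1" "\<forall>Q'. (\<forall>x\<in>S1. (x \<in> Q) = (x \<in> Q')) \<longrightarrow> eval Q' (Prim f g) (k # xs) y"
    "finite S2" "\<forall>Q'. (\<forall>x\<in>S2. (x \<in> Q) = (x \<in> Q')) \<longrightarrow> eval Q' g (k # y # xs) z" by blast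
  then show ?case by (intro exI[of _ "S1 \<union> S2"]) (auto intro: eval.eval_PrimS)
next
  case (eval_Mn f k xs)
  obtain S0 where S0: "finite S0" "\<forall>Q'. (\<forall>x\<in>S0. (x \<in> Q) = (x \<in> Q')) \<longrightarrow> eval Q' f (k # xs) 0" using eval_Mn by blast
  obtain Y S where S: "\<forall>j<k. finite (S j) \<and> (\<forall>Q'. (\<forall>x\<in>S j. (x \<in> Q) = (x \<in> Q')) \<longrightarrow> eval Q' f (j # xs) (Suc (Y j)))"
    using eval_Mn.IH(2) by metis
  show ?case
  proof (rule exI[of _ "S0 \<union> (\<Union>j<k. S j)"], intro conjI allI impI)
    show "finite (S0 \<union> (\<Union>j<k. S j))" using S S0 by auto
    fix Q' assume A: "\<forall>x\<in>S0 \<union> (\<Union>j<k. S j). (x \<in> Q) = (x \<in> Q')"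
    show "eval Q' (Mn f) xs k"
    proof (rule eval.eval_Mn)
      show "eval Q' f (k # xs) 0" using S0 A by blast
      show "\<forall>j<k. \<exists>y. eval Q' f (j # xs) (Suc y)" using S A by blast
    qed
  qed
qed

lemma join_iff: "x \<in> join A B \<longleftrightarrow> (even x \<and> x div 2 \<in> A) \<or> (odd x \<and> x div 2 \<in> B)"
  unfolding join_def by (auto elim: evenE oddE)

lemma bv_iff: "rec_nat (0::nat) (\<lambda>j r. if r = 0 then (w::nat\<Rightarrow>nat) j else 1) n \<noteq> 0 \<longleftrightarrow> (\<exists>j<n. w j \<noteq> 0)"
  by (induction n) (auto simp: less_Suc_eq)

theorem mainTheorem10:
  fixes n m :: nat and A0 A1 :: "str set" and C F X :: "nat set"
    and \<phi> :: "nat set \<Rightarrow> valuation \<Rightarrow> bool" and M :: matrix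
  assumes "n \<ge> 1"
    and "fair n C A0 A1"
    and "mathias F X" and "computable_in X C"
    and "m \<ge> 1"
    and "sigma1_formula_param C m (2 ^ n * m) \<phi>"
    and "disjoint_matrix m (2 ^ n * m) M"
  shows "\<exists>E Y. mathias E Y \<and> mathias_ext E Y F X \<and> computable_in Y C \<and>
           ((\<forall>G. satisfies G E Y \<longrightarrow> \<not> essential m (2 ^ n * m) M (\<phi> G))
            \<or> (\<exists>V. is_valuation m (2 ^ n * m) M V \<and> diagonalizes m (2 ^ n * m) V A0 A1 \<and> \<phi> E V))"
proof -
  let ?N = "2 ^ n * m"
  obtain f where f: "\<And>G V. finite_entries m ?N V \<Longrightarrow> (\<phi> G V \<longleftrightarrow> (\<exists>y. eval (join C G) f [code_val m ?N V] y))"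
    using assms(6) unfolding sigma1_formula_param_def by blast
  obtain hX where hX: "\<And>x. eval C hX [x] (if x \<in> X then 1 else 0)"
    using assms(4) unfolding computable_in_def by blast
  have finF: "finite F" and infX: "infinite X" and FX: "\<And>a b. a \<in> F \<Longrightarrow> b \<in> X \<Longrightarrow> a < b"
    using assms(3) unfolding mathias_def by auto
  define D where "D e = F \<union> (set_decode e \<inter> X)" for e
  define cF where "cF = set_encode F"
  define DmemP where "DmemP = Comp condP [Comp bitP [Proj 0, constP cF], oneP,
      Comp condP [Comp bitP [Proj 0, Proj 1], Comp hX [Proj 0], Zero]]"
  have Dmem: "eval C DmemP [k, e] (if k \<in> D e then 1 else 0)" for k e
    unfolding DmemP_def
    by (rule comp3[OF comp2[OF eval_Proj'[OF refl] constP_ev bitP_ev[OF refl]] oneP_ev[OF refl]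
        comp3[OF comp2[OF eval_Proj'[OF refl] eval_Proj'[OF refl] bitP_ev[OF refl]] comp1[OF eval_Proj'[OF refl] hX]
          eval_Zero'[OF refl] condP_ev[OF refl]]], rule condP_ev)
       (simp add: D_def cF_def finF)
  define memP where "memP = Comp condP [Comp parP [Proj 1], Comp DmemP [Comp halfP [Proj 1], Proj 0],
      Comp Orc [Comp halfP [Proj 1]]]"
  have mem: "eval C memP [e, x] (if x \<in> join C (D e) then 1 else 0)" for e x
    unfolding memP_def
    by (rule comp3[OF comp1[OF eval_Proj'[OF refl] parP_ev[OF refl]]
         comp2[OF comp1[OF eval_Proj'[OF refl] halfP_ev[OF refl]] eval_Proj'[OF refl] Dmem]
         comp1[OF comp1[OF eval_Proj'[OF refl] halfP_ev[OF refl]] eval_Orc'[OF refl]]], rule condP_ev)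
       (auto simp: join_iff odd_iff_mod_2_eq_one)
  note KC = Kp_correct[where Oe = "\<lambda>e. join C (D e)", OF mem]
  define BP where "BP = Prim Zero (Comp condP [Proj 1, oneP, Comp (Kp memP f 1) [Proj 2, Proj 0, Proj 3]])"
  define bv where "bv t c k = rec_nat 0 (\<lambda>j r. if r = 0 then kv f (join C (D j)) t [c] else 1) k" for t c k
  have BPev: "eval C BP [k, t, c] (bv t c k)" for k t c
  proof -
    have S: "eval C (Comp condP [Proj 1, oneP, Comp (Kp memP f 1) [Proj 2, Proj 0, Proj 3]]) (j # r # [t, c])
       (if r = 0 then kv f (join C (D j)) t [c] else 1)" for j r
    proof -
      have "eval C (Kp memP f 1) [t, j, c] (kv f (join C (D j)) t [c])" using KC[where xs="[c]" and a=1 and t=t and e=j and f=f] by simp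
      then have K3: "eval C (Comp (Kp memP f 1) [Proj 2, Proj 0, Proj 3]) [j, r, t, c] (kv f (join C (D j)) t [c])"
        by (intro comp3[OF eval_Proj'[OF refl] eval_Proj'[OF refl] eval_Proj'[OF refl]]) simp
      show ?thesis
        by (rule comp3[OF eval_Proj'[OF refl] oneP_ev[OF refl] K3], rule condP_ev) simp
    qed
    show ?thesis unfolding BP_def bv_def using prim_eval[OF eval_Zero S] by simp
  qed
  define hP where "hP = Comp nsgP [Comp BP [Comp Succ [Proj 0], Proj 0, Proj 1]]"
  have hPev: "eval C hP [t, c] (if bv t c (Suc t) = 0 then 1 else 0)" for t c
  proof -
    have "eval C (Comp BP [Comp Succ [Proj 0], Proj 0, Proj 1]) [t, c] (bv t c (Suc t))"
      by (rule comp3[OF comp1[OF eval_Proj'[OF refl] eval_Succ'[OF refl]] eval_Proj'[OF refl] eval_Proj'[OF refl]], simp, rule BPev)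
    then show ?thesis unfolding hP_def by (rule comp1, intro nsgP_ev) simp
  qed
  define gP where "gP = Mn hP"
  have bvI: "bv t c k \<noteq> 0 \<longleftrightarrow> (\<exists>j<k. kv f (join C (D j)) t [c] \<noteq> 0)" for t c k
    unfolding bv_def by (rule bv_iff)
  have G1: "\<exists>e t y. kv f (join C (D e)) t [c] = Suc y" if "eval C gP [c] z" for c z
  proof -
    have "eval C hP [z, c] 0" using that unfolding gP_def by (cases rule: eval.cases) auto
    then have "(if bv z c (Suc z) = 0 then 1 else 0) = (0::nat)" using eval_det[OF hPev] by blast
    then have "bv z c (Suc z) \<noteq> 0" by (auto split: if_splits)
    then obtain j where "kv f (join C (D j)) z [c] \<noteq> 0" using bvI by blast
    then show ?thesis by (metis not0_implies_Suc)
  qed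
  have G2: "\<exists>z. eval C gP [c] z" if kv0: "kv f (join C (D e)) t0 [c] = Suc y" for c e t0 y
  proof -
    define hv where "hv t = (if bv t c (Suc t) = 0 then 1 else (0::nat))" for t
    have "kv f (join C (D e)) (t0 + e) [c] = Suc y" using kv_mono[OF kv0] by simp
    then have "hv (t0 + e) = 0" unfolding hv_def using bvI[of "t0 + e" c "Suc (t0 + e)"] by auto
    define k where "k = (LEAST t. hv t = 0)"
    have k0: "hv k = 0" unfolding k_def by (rule LeastI) fact
    have kj: "hv j = Suc 0" if "j < k" for j
      using not_less_Least[OF that[unfolded k_def]] unfolding hv_def by (auto split: if_splits)
    have "eval C gP [c] k" unfolding gP_def
    proof (rule eval_Mn)
      show "eval C hP (k # [c]) 0" using hPev[of k c] k0 unfolding hv_def by simp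
      show "\<forall>j<k. \<exists>y. eval C hP (j # [c]) (Suc y)"
      proof (intro allI impI)
        fix j assume "j < k"
        have "eval C hP [j, c] (hv j)" using hPev[of j c] unfolding hv_def by simp
        then show "\<exists>y. eval C hP (j # [c]) (Suc y)" using kj[OF \<open>j < k\<close>] by auto
      qed
    qed
    then show ?thesis by blast
  qed
  define \<psi> where "\<psi> V = (\<exists>y. eval C gP [code_val m ?N V] y)" for V
  have sig: "sigma1_formula C m ?N \<psi>" unfolding sigma1_formula_def \<psi>_def by blast
  have fe: "finite_entries m ?N V" if "is_valuation m ?N M V" for V
    using that unfolding is_valuation_def finite_entries_def by blast
  show ?thesis
  proof (cases "essential m ?N M \<psi>")
    case True
    obtain V where V: "is_valuation m ?N M V" "diagonalizes m ?N V A0 A1" "\<psi> V"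
      using assms(2) sig assms(7) True unfolding fair_def by blast
    obtain e t y where "kv f (join C (D e)) t [code_val m ?N V] = Suc y"
      using G1 V(3) unfolding \<psi>_def by blast
    then have "eval (join C (D e)) f [code_val m ?N V] y" by (rule kv_sound)
    then have phi: "\<phi> (D e) V" using f[OF fe[OF V(1)]] by blast
    define b where "b = Max (insert 0 (D e))"
    define Y where "Y = {x \<in> X. b < x}"
    have finD: "finite (D e)" unfolding D_def using finF by simp
    have "mathias (D e) Y" unfolding mathias_def
    proof (intro conjI ballI)
      show "finite (D e)" by fact
      have "Y = X - {..b}" unfolding Y_def by auto
      then show "infinite Y" using infX by simp
      fix a y assume "a \<in> D e" "y \<in> Y"
      have "a \<le> b" unfolding b_def using finD \<open>a \<in> D e\<close> by (intro Max_ge) auto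
      moreover have "b < y" using \<open>y \<in> Y\<close> unfolding Y_def by simp
      ultimately show "a < y" by simp
    qed
    moreover have "mathias_ext (D e) Y F X" unfolding mathias_ext_def D_def Y_def by auto
    moreover have "computable_in Y C" unfolding computable_in_def
    proof (rule exI[of _ "Comp condP [Comp hX [Proj 0], Comp sgP [subcP b], Zero]"], rule allI)
      fix x
      show "eval C (Comp condP [Comp hX [Proj 0], Comp sgP [subcP b], Zero]) [x] (if x \<in> Y then 1 else 0)"
        by (rule comp3[OF comp1[OF eval_Proj'[OF refl] hX] comp1[OF subcP_ev sgP_ev[OF refl]] eval_Zero'[OF refl]], rule condP_ev)
           (auto simp: Y_def)
    qed
    ultimately show ?thesis using V phi by blast
  next
    case False
    then obtain s where s: "\<And>V. is_valuation m ?N M V \<Longrightarrow> valuation_gt m ?N V s \<Longrightarrow> \<not> \<psi> V"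
      unfolding essential_def by blast
    have "\<not> essential m ?N M (\<phi> G)" if sat: "satisfies G F X" for G
    proof
      assume "essential m ?N M (\<phi> G)"
      then obtain V where V: "is_valuation m ?N M V" "valuation_gt m ?N V s" "\<phi> G V"
        unfolding essential_def by blast
      let ?c = "code_val m ?N V"
      obtain y where ev: "eval (join C G) f [?c] y" using f[OF fe[OF V(1)]] V(3) by blast
      obtain S where S: "finite S" "\<And>Q'. \<forall>x\<in>S. (x \<in> join C G) = (x \<in> Q') \<Longrightarrow> eval Q' f [?c] y"
        using finite_use[OF ev] by blast
      define E' where "E' = F \<union> {k \<in> G. 2 * k + 1 \<in> S}"
      have FG: "F \<subseteq> G" "G - F \<subseteq> X" using sat unfolding satisfies_def by auto
      have "{k. 2 * k + 1 \<in> S} \<subseteq> (\<lambda>x. x div 2) ` S" by (auto intro: image_eqI[where x="2 * _ + 1"])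
      then have finE: "finite E'" unfolding E'_def using finF S(1) by (auto intro: finite_subset)
      have "\<forall>x\<in>S. (x \<in> join C G) = (x \<in> join C E')"
      proof
        fix x assume "x \<in> S"
        moreover have "odd x \<Longrightarrow> 2 * (x div 2) + 1 = x" by simp
        ultimately show "(x \<in> join C G) = (x \<in> join C E')"
          unfolding join_iff E'_def using FG by auto
      qed
      then have ev': "eval (join C E') f [?c] y" by (rule S(2))
      define e where "e = set_encode (E' - F)"
      have "E' - F \<subseteq> X" unfolding E'_def using FG by auto
      then have "D e = E'" unfolding D_def e_def using finE by (auto simp: E'_def)
      then obtain t0 where "kv f (join C (D e)) t0 [?c] = Suc y" using kv_complete[OF ev'] by auto
      then have "\<psi> V" unfolding \<psi>_def using G2 by blast
      then show False using s V by blast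
    qed
    moreover have "mathias_ext F X F X" unfolding mathias_ext_def by auto
    ultimately show ?thesis using assms(3,4) by blast
  qed
qed

end
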